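(* Let $a_1,a_2\in\mathbb{R}$ with $a_1^2+4a_2>0$, and assume either $a_1<0$ and $a_2<0$, or $a_2>0$ and $a_1+a_2<1$. Let $X$ be the AR(2)-process with these coefficients and $s_2:=(a_1-\sqrt{a_1^2+4a_2})/2$. Then $s_2<0$, $-a_2/s_2<1$, and $Z_n:=X_n-s_2X_{n-1}$ satisfies $Z_n=(-a_2/s_2)Z_{n-1}+Y_n$ for $n\ge1$. In particular, for all $x\ge0$ and $N\ge1$, $$\mathbb{P}\Big(\sup_{n=1,\dots,N}X_n\le x\Big)\le\mathbb{P}\Big(\sup_{n=1,\dots,N}Z_n\le(1-s_2)x\Big).$$
   Context: Let $(Y_n)_{n\ge1}$ be i.i.d. nondegenerate real random variables. The AR(2)-process is $X_n=a_1X_{n-1}+a_2X_{n-2}+Y_n$ for $n\ge1$ with $X_n=0$ for $n\le0$. *)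

theory Defs
  imports "HOL-Probability.Probability"
begin

text \<open>AR(2) process: X 0 = 0 (and X at negative times = 0),
  X n = a1 * X (n-1) + a2 * X (n-2) + Y n for n >= 1.
  Innovations are indexed by n >= 1; Y 0 is unused.\<close>
fun ar2 :: "real \<Rightarrow> real \<Rightarrow> (nat \<Rightarrow> 'a \<Rightarrow> real) \<Rightarrow> nat \<Rightarrow> 'a \<Rightarrow> real" where
  "ar2 a1 a2 Y 0 \<omega> = 0"
| "ar2 a1 a2 Y (Suc 0) \<omega> = Y 1 \<omega>"
| "ar2 a1 a2 Y (Suc (Suc n)) \<omega> =
     a1 * ar2 a1 a2 Y (Suc n) \<omega> + a2 * ar2 a1 a2 Y n \<omega> + Y (Suc (Suc n)) \<omega>"

end

theory Submission
  imports Defs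
begin

lemma ar2_meas:
  assumes "\<And>n. n \<ge> 1 \<Longrightarrow> Y n \<in> borel_measurable M"
  shows "ar2 a1 a2 Y n \<in> borel_measurable M"
proof (induction n rule: less_induct)
  case (less n)
  show ?case
  proof (cases n)
    case 0 then show ?thesis by simp
  next
    case (Suc m)
    show ?thesis
    proof (cases m)
      case 0 then show ?thesis using Suc assms[of 1] by simp
    next
      case (Suc k)
      have "ar2 a1 a2 Y (Suc k) \<in> borel_measurable M" "ar2 a1 a2 Y k \<in> borel_measurable M"
        using less \<open>n = Suc m\<close> Suc by auto
      moreover have "Y (Suc (Suc k)) \<in> borel_measurable M" using assms by simp
      ultimately show ?thesis using \<open>n = Suc m\<close> Suc by simp
    qed
  qed
qed

theorem mainTheorem11:
  fixes M :: "'a measure" and Y :: "nat \<Rightarrow> 'a \<Rightarrow> real" and a1 a2 :: real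
  assumes "prob_space M"
    and "\<And>n. n \<ge> 1 \<Longrightarrow> Y n \<in> borel_measurable M"
    and "prob_space.indep_vars M (\<lambda>_. borel) Y {1..}"
    and "\<And>n. n \<ge> 1 \<Longrightarrow> distr M borel (Y n) = distr M borel (Y 1)"
    and "\<not> (\<exists>c. AE \<omega> in M. Y 1 \<omega> = c)"
    and "a1\<^sup>2 + 4 * a2 > 0"
    and "(a1 < 0 \<and> a2 < 0) \<or> (a2 > 0 \<and> a1 + a2 < 1)"
  shows "let X = ar2 a1 a2 Y;
             s2 = (a1 - sqrt (a1\<^sup>2 + 4 * a2)) / 2;
             Z = (\<lambda>n \<omega>. X n \<omega> - s2 * (if n = 0 then 0 else X (n - 1) \<omega>))
         in s2 < 0 \<and> - a2 / s2 < 1 \<and>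
            (\<forall>n\<ge>1. \<forall>\<omega>. Z n \<omega> = (- a2 / s2) * Z (n - 1) \<omega> + Y n \<omega>) \<and>
            (\<forall>x\<ge>0. \<forall>N\<ge>1.
               measure M {\<omega> \<in> space M. (MAX n\<in>{1..N}. X n \<omega>) \<le> x}
               \<le> measure M {\<omega> \<in> space M. (MAX n\<in>{1..N}. Z n \<omega>) \<le> (1 - s2) * x})"
proof -
  define X where "X = ar2 a1 a2 Y"
  define D where "D = a1\<^sup>2 + 4 * a2"
  define s2 where "s2 = (a1 - sqrt D) / 2"
  define s1 where "s1 = (a1 + sqrt D) / 2"
  define Z where "Z = (\<lambda>n \<omega>. X n \<omega> - s2 * (if n = 0 then 0 else X (n - 1) \<omega>))"
  have D0: "D > 0" using assms(6) D_def by simp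
  have sq: "sqrt D * sqrt D = D" using D0 by simp
  have sqp: "sqrt D > 0" using D0 by simp
  have prod: "s1 * s2 = - a2" unfolding s1_def s2_def using sq D_def
    by (simp add: field_simps power2_eq_square)
  have s2neg: "s2 < 0"
  proof (cases "a2 > 0")
    case True
    have "a1\<^sup>2 < D" using True D_def by simp
    hence "\<bar>a1\<bar> < sqrt D" using real_less_rsqrt by (metis real_sqrt_abs real_sqrt_less_iff)
    then show ?thesis unfolding s2_def by simp
  next
    case False
    then have "a1 < 0" using assms(7) by auto
    then have "a1 - sqrt D < 0" using sqp by linarith then show ?thesis unfolding s2_def by (simp add: divide_neg_pos)
  qed
  have eq: "- a2 / s2 = s1" using prod s2neg by (simp add: field_simps)
  have s1lt: "s1 < 1"
  proof (cases "a2 > 0")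
    case True
    hence h: "a1 + a2 < 1" using assms(7) by auto
    have "D < (2 - a1)\<^sup>2" using h D_def by (simp add: power2_eq_square algebra_simps)
    moreover have "2 - a1 > 0" using h True by simp
    ultimately have "sqrt D < 2 - a1"
      by (metis abs_of_pos real_sqrt_abs real_sqrt_less_iff)
    then show ?thesis unfolding s1_def by simp
  next
    case False
    then have a: "a1 < 0" "a2 < 0" using assms(7) by auto
    have "D < a1\<^sup>2" using a D_def by simp
    hence "sqrt D < \<bar>a1\<bar>" by (metis real_sqrt_abs real_sqrt_less_iff)
    then show ?thesis unfolding s1_def using a by simp
  qed
  have rec: "\<forall>n\<ge>1. \<forall>\<omega>. Z n \<omega> = s1 * Z (n - 1) \<omega> + Y n \<omega>"
  proof (intro allI impI)
    fix n :: nat and \<omega> assume "n \<ge> 1"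
    then obtain m where m: "n = Suc m" by (cases n) auto
    show "Z n \<omega> = s1 * Z (n - 1) \<omega> + Y n \<omega>"
    proof (cases m)
      case 0 then show ?thesis using m by (simp add: Z_def X_def)
    next
      case (Suc k)
      have "a1 = s1 + s2" unfolding s1_def s2_def by (simp add: field_simps)
      have "a2 = - (s1 * s2)" using prod by simp
      then show ?thesis using m Suc \<open>a1 = s1 + s2\<close> by (simp add: Z_def X_def algebra_simps)
    qed
  qed
  have Xm: "\<And>n. X n \<in> borel_measurable M" unfolding X_def using ar2_meas assms(2) by blast
  have Zm: "\<And>n. Z n \<in> borel_measurable M" unfolding Z_def using Xm
    by (intro borel_measurable_diff borel_measurable_times borel_measurable_const) auto
  have ineq: "\<forall>x\<ge>0. \<forall>N\<ge>1.
               measure M {\<omega> \<in> space M. (MAX n\<in>{1..N}. X n \<omega>) \<le> x}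
               \<le> measure M {\<omega> \<in> space M. (MAX n\<in>{1..N}. Z n \<omega>) \<le> (1 - s2) * x}"
  proof (intro allI impI)
    fix x :: real and N :: nat assume x: "x \<ge> 0" and N: "N \<ge> 1"
    interpret prob_space M by (rule assms(1))
    have ne: "{1..N} \<noteq> {}" using N by simp
    have setZ: "{\<omega> \<in> space M. (MAX n\<in>{1..N}. Z n \<omega>) \<le> (1 - s2) * x}
        = {\<omega> \<in> space M. \<forall>n\<in>{1..N}. Z n \<omega> \<le> (1 - s2) * x}"
      using ne by (simp add: Max_le_iff)
    have meas: "{\<omega> \<in> space M. \<forall>n\<in>{1..N}. Z n \<omega> \<le> (1 - s2) * x} \<in> sets M"
      using Zm by measurable
    have sub: "{\<omega> \<in> space M. (MAX n\<in>{1..N}. X n \<omega>) \<le> x}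
        \<subseteq> {\<omega> \<in> space M. \<forall>n\<in>{1..N}. Z n \<omega> \<le> (1 - s2) * x}"
    proof safe
      fix \<omega> n assume w: "\<omega> \<in> space M" and mx: "(MAX n\<in>{1..N}. X n \<omega>) \<le> x"
        and n: "n \<in> {1..N}"
      have allX: "\<forall>k\<in>{1..N}. X k \<omega> \<le> x" using mx ne by (simp add: Max_le_iff)
      have Xn: "X n \<omega> \<le> x" using allX n by blast
      have Xp: "X (n - 1) \<omega> \<le> x"
      proof (cases "n = 1")
        case True then show ?thesis using x by (simp add: X_def)
      next
        case False then have "n - 1 \<in> {1..N}" using n by auto
        then show ?thesis using allX by blast
      qed
      have "- s2 * X (n - 1) \<omega> \<le> - s2 * x" using Xp s2neg by (intro mult_left_mono) auto
      then show "Z n \<omega> \<le> (1 - s2) * x" using n Xn by (auto simp: Z_def algebra_simps)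
    qed
    show "measure M {\<omega> \<in> space M. (MAX n\<in>{1..N}. X n \<omega>) \<le> x}
        \<le> measure M {\<omega> \<in> space M. (MAX n\<in>{1..N}. Z n \<omega>) \<le> (1 - s2) * x}"
      unfolding setZ using sub meas by (rule finite_measure_mono)
  qed
  show ?thesis
    unfolding Let_def X_def[symmetric] D_def[symmetric] s2_def[symmetric] eq
    using s2neg s1lt rec ineq unfolding Z_def by (intro conjI)
qed

end
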